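(* Let $G$ be a connected graph of order $n\geq 2$ and let $H$ be a graph with $k\geq 1$ connected components $H_1,\dots,H_k$. Then $$\max\{\chi_L(H_t+K_1)\mid 1\leq t\leq k\}\ \leq\ \chi_L(G\odot H)\ \leq\ \chi_L(G)+\sum_{t=1}^{k}\bigl(\chi_L(H_t+K_1)-1\bigr).$$
   Context: All graphs are finite and simple. A $k$-coloring of a connected graph $G$ is a map $c:V(G)\to\{1,\dots,k\}$ with $c(u)\neq c(v)$ for adjacent $u,v$; it induces the partition $\Pi=\{C_1,\dots,C_k\}$ into color classes $C_i=c^{-1}(i)$. The color code of $v$ is $c_\Pi(v)=(d(v,C_1),\dots,d(v,C_k))$ with $d(v,C_i)=\min\{d(v,x): x\in C_i\}$ (graph distance). $c$ is a locating coloring if distinct vertices have distinct color codes; the locating-chromatic number $\chi_L(G)$ is the least $k$ for which a locating $k$-coloring exists. The corona product $G\odot H$ of a graph $G$ with vertex set $\{a_1,\dots,a_n\}$ and a graph $H$ is obtained from one copy of $G$ and $n$ disjoint copies of $H$ by joining $a_i$ to every vertex of the $i$-th copy of $H$. For a graph $F$, $F+K_1$ denotes the join of $F$ with a single new vertex adjacent to all vertices of $F$. *)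

theory Defs
  imports Main
begin

definition simple_graph :: "'a set \<Rightarrow> ('a \<Rightarrow> 'a \<Rightarrow> bool) \<Rightarrow> bool" where
  "simple_graph V E \<longleftrightarrow> finite V \<and> (\<forall>u v. E u v \<longrightarrow> u \<in> V \<and> v \<in> V)
     \<and> (\<forall>u v. E u v \<longrightarrow> E v u) \<and> (\<forall>v. \<not> E v v)"

inductive reach :: "('a \<Rightarrow> 'a \<Rightarrow> bool) \<Rightarrow> 'a \<Rightarrow> 'a \<Rightarrow> nat \<Rightarrow> bool" for E where
  reach_refl: "reach E u u 0"
| reach_step: "E u w \<Longrightarrow> reach E w v n \<Longrightarrow> reach E u v (Suc n)"

definition gdist :: "('a \<Rightarrow> 'a \<Rightarrow> bool) \<Rightarrow> 'a \<Rightarrow> 'a \<Rightarrow> nat" where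
  "gdist E u v = (LEAST n. reach E u v n)"

definition connected_graph :: "'a set \<Rightarrow> ('a \<Rightarrow> 'a \<Rightarrow> bool) \<Rightarrow> bool" where
  "connected_graph V E \<longleftrightarrow> simple_graph V E \<and> V \<noteq> {} \<and>
     (\<forall>u\<in>V. \<forall>v\<in>V. \<exists>n. reach E u v n)"

definition dist_class :: "'a set \<Rightarrow> ('a \<Rightarrow> 'a \<Rightarrow> bool) \<Rightarrow> ('a \<Rightarrow> nat) \<Rightarrow> 'a \<Rightarrow> nat \<Rightarrow> nat" where
  "dist_class V E c v i = (LEAST n. \<exists>x\<in>V. c x = i \<and> gdist E v x = n)"

text \<open>A k-colouring (all k colour classes nonempty, so that it induces a partition
  into k classes) which is proper.\<close>
definition coloring :: "'a set \<Rightarrow> ('a \<Rightarrow> 'a \<Rightarrow> bool) \<Rightarrow> ('a \<Rightarrow> nat) \<Rightarrow> nat \<Rightarrow> bool" where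
  "coloring V E c k \<longleftrightarrow> c ` V = {1..k} \<and> (\<forall>u\<in>V. \<forall>v\<in>V. E u v \<longrightarrow> c u \<noteq> c v)"

definition locating_coloring :: "'a set \<Rightarrow> ('a \<Rightarrow> 'a \<Rightarrow> bool) \<Rightarrow> ('a \<Rightarrow> nat) \<Rightarrow> nat \<Rightarrow> bool" where
  "locating_coloring V E c k \<longleftrightarrow> coloring V E c k \<and>
     (\<forall>u\<in>V. \<forall>v\<in>V. u \<noteq> v \<longrightarrow>
        (\<exists>i\<in>{1..k}. dist_class V E c u i \<noteq> dist_class V E c v i))"

definition chi_L :: "'a set \<Rightarrow> ('a \<Rightarrow> 'a \<Rightarrow> bool) \<Rightarrow> nat" where
  "chi_L V E = (LEAST k. \<exists>c. locating_coloring V E c k)"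

definition components :: "'a set \<Rightarrow> ('a \<Rightarrow> 'a \<Rightarrow> bool) \<Rightarrow> 'a set set" where
  "components V E = {{w\<in>V. \<exists>n. reach E v w n} | v. v \<in> V}"

definition induced :: "('a \<Rightarrow> 'a \<Rightarrow> bool) \<Rightarrow> 'a set \<Rightarrow> 'a \<Rightarrow> 'a \<Rightarrow> bool" where
  "induced E S u v \<longleftrightarrow> E u v \<and> u \<in> S \<and> v \<in> S"

text \<open>F + K_1: new apex vertex None joined to all (Some) vertices of F.\<close>
definition coneV :: "'a set \<Rightarrow> 'a option set" where
  "coneV V = insert None (Some ` V)"

fun coneE :: "'a set \<Rightarrow> ('a \<Rightarrow> 'a \<Rightarrow> bool) \<Rightarrow> 'a option \<Rightarrow> 'a option \<Rightarrow> bool" where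
  "coneE V E (Some a) (Some b) = E a b"
| "coneE V E (Some a) None = (a \<in> V)"
| "coneE V E None (Some b) = (b \<in> V)"
| "coneE V E None None = False"

text \<open>Corona product G \<odot> H: vertex Inl a is a of G, Inr (a,h) is h in the copy of H at a.\<close>
definition coronaV :: "'a set \<Rightarrow> 'b set \<Rightarrow> ('a + 'a \<times> 'b) set" where
  "coronaV VG VH = Inl ` VG \<union> Inr ` (VG \<times> VH)"

fun coronaE :: "'a set \<Rightarrow> ('a \<Rightarrow> 'a \<Rightarrow> bool) \<Rightarrow> 'b set \<Rightarrow> ('b \<Rightarrow> 'b \<Rightarrow> bool)
    \<Rightarrow> ('a + 'a \<times> 'b) \<Rightarrow> ('a + 'a \<times> 'b) \<Rightarrow> bool" where
  "coronaE VG EG VH EH (Inl a) (Inl b) = EG a b"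
| "coronaE VG EG VH EH (Inl a) (Inr (b, h)) = (a = b \<and> a \<in> VG \<and> h \<in> VH)"
| "coronaE VG EG VH EH (Inr (b, h)) (Inl a) = (a = b \<and> a \<in> VG \<and> h \<in> VH)"
| "coronaE VG EG VH EH (Inr (a, h)) (Inr (b, h')) = (a = b \<and> a \<in> VG \<and> EH h h')"

end

theory Submission
  imports Defs "HOL-Library.Nat_Bijection"
begin

lemma reach_trans: "reach E u v m \<Longrightarrow> reach E v w n \<Longrightarrow> reach E u w (m+n)"
  by (induction rule: reach.induct) (auto intro: reach_step)

lemma reach_snoc: "reach E u v n \<Longrightarrow> E v w \<Longrightarrow> reach E u w (Suc n)"
  using reach_trans[of E u v n w 1] by (simp add: reach_step reach_refl)

lemma reach_sym: "reach E u v n \<Longrightarrow> (\<forall>x y. E x y \<longrightarrow> E y x) \<Longrightarrow> reach E v u n"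
  by (induction rule: reach.induct) (auto intro: reach_refl reach_snoc)

lemma reach_in: "reach E u v n \<Longrightarrow> (\<forall>x y. E x y \<longrightarrow> x\<in>V \<and> y\<in>V) \<Longrightarrow> u\<in>V \<Longrightarrow> v\<in>V"
  by (induction rule: reach.induct) auto

lemma reach_0: "reach E u v 0 \<Longrightarrow> u = v"
  by (erule reach.cases) auto

lemma reach_1: "reach E u v (Suc 0) \<Longrightarrow> E u v"
  by (erule reach.cases) (auto dest: reach_0)

lemma gdist_le: "reach E u v n \<Longrightarrow> gdist E u v \<le> n"
  unfolding gdist_def by (rule Least_le)

lemma gdist_reach: "reach E u v n \<Longrightarrow> reach E u v (gdist E u v)"
  unfolding gdist_def by (rule LeastI)

lemma gdist_self: "gdist E u u = 0"
  using gdist_le[OF reach_refl, of E u] by simp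

lemma gdist_0: "reach E u v n \<Longrightarrow> gdist E u v = 0 \<Longrightarrow> u = v"
  by (metis gdist_reach reach_0)

lemma gdist_adj: "E u v \<Longrightarrow> gdist E u v \<le> 1"
proof -
  assume "E u v"
  then have "reach E u v (Suc 0)" by (intro reach_step[of E u v] reach_refl)
  then show ?thesis by (rule gdist_le[THEN order_trans]) simp
qed

lemma gdist_2: "E u w \<Longrightarrow> E w v \<Longrightarrow> gdist E u v \<le> 2"
proof -
  assume "E u w" "E w v"
  then have "reach E u v (Suc (Suc 0))" by (intro reach_step[of E u w] reach_step[of E w v] reach_refl)
  then show ?thesis by (rule gdist_le[THEN order_trans]) simp
qed

lemma gdist_pos: "reach E u v n \<Longrightarrow> u \<noteq> v \<Longrightarrow> 1 \<le> gdist E u v"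
proof -
  assume r: "reach E u v n" and ne: "u \<noteq> v"
  then have "gdist E u v \<noteq> 0" using gdist_0[OF r] ne by auto
  then show ?thesis by simp
qed

lemma gdist_ge2: "reach E u v n \<Longrightarrow> u \<noteq> v \<Longrightarrow> \<not> E u v \<Longrightarrow> 2 \<le> gdist E u v"
proof -
  assume r: "reach E u v n" and ne: "u \<noteq> v" and na: "\<not> E u v"
  have r2: "reach E u v (gdist E u v)" using gdist_reach[OF r] .
  have "gdist E u v \<noteq> 0" using gdist_0[OF r] ne by auto
  moreover have "gdist E u v \<noteq> 1"
  proof
    assume g1: "gdist E u v = 1"
    have "reach E u v (Suc 0)" using r2 g1 by (simp only: One_nat_def)
    then show False using na by (auto dest: reach_1)
  qed
  ultimately show ?thesis by linarith
qed

lemma reach_hom: "reach E1 u v n \<Longrightarrow> (\<forall>x y. E1 x y \<longrightarrow> E2 (f x) (f y) \<or> f x = f y)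
   \<Longrightarrow> \<exists>m\<le>n. reach E2 (f u) (f v) m"
proof (induction rule: reach.induct)
  case (reach_refl u)
  then show ?case by (auto intro: reach.reach_refl)
next
  case (reach_step u w v n)
  then obtain m where m: "m \<le> n" "reach E2 (f w) (f v) m" by auto
  show ?case
  proof (cases "f u = f w")
    case True then show ?thesis using m by (metis le_SucI)
  next
    case False
    then have "E2 (f u) (f w)" using reach_step by auto
    then show ?thesis using m by (meson Suc_le_mono reach.reach_step)
  qed
qed

lemma gdist_hom:
  assumes r: "reach E1 u v n" and h: "\<forall>x y. E1 x y \<longrightarrow> E2 (f x) (f y) \<or> f x = f y"
  shows "gdist E2 (f u) (f v) \<le> gdist E1 u v"
proof -
  obtain m where "m \<le> gdist E1 u v" "reach E2 (f u) (f v) m"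
    using reach_hom[OF gdist_reach[OF r] h] by blast
  then show ?thesis using gdist_le[of E2 "f u" "f v" m] by linarith
qed

lemma dc_props:
  assumes "x0 \<in> V" "c x0 = i"
  shows "\<exists>x\<in>V. c x = i \<and> gdist E v x = dist_class V E c v i \<and>
     (\<forall>y\<in>V. c y = i \<longrightarrow> dist_class V E c v i \<le> gdist E v y)"
proof -
  let ?P = "\<lambda>n. \<exists>x\<in>V. c x = i \<and> gdist E v x = n"
  have p: "?P (gdist E v x0)" using assms by auto
  have "?P (Least ?P)" by (rule LeastI[of ?P, OF p])
  moreover have "\<forall>y\<in>V. c y = i \<longrightarrow> Least ?P \<le> gdist E v y"
  proof (intro ballI impI)
    fix y assume "y \<in> V" "c y = i"
    then have "?P (gdist E v y)" by auto
    then show "Least ?P \<le> gdist E v y" by (rule Least_le)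
  qed
  ultimately show ?thesis unfolding dist_class_def by auto
qed

lemma dc_eqI:
  assumes "x0 \<in> V" "c x0 = i" "gdist E v x0 = n" "\<forall>y\<in>V. c y = i \<longrightarrow> n \<le> gdist E v y"
  shows "dist_class V E c v i = n"
  unfolding dist_class_def using assms by (intro Least_equality) auto

lemma conn_reach: "connected_graph V E \<Longrightarrow> u\<in>V \<Longrightarrow> v\<in>V \<Longrightarrow> \<exists>n. reach E u v n"
  unfolding connected_graph_def by auto

lemma diff_color:
  assumes "connected_graph V E" "u\<in>V" "v\<in>V" "c u \<noteq> c v"
  shows "dist_class V E c u (c u) \<noteq> dist_class V E c v (c u)"
proof -
  have "dist_class V E c u (c u) = 0"
    using assms by (intro dc_eqI[of u]) (auto simp: gdist_self)
  moreover obtain x where x: "x\<in>V" "c x = c u" "gdist E v x = dist_class V E c v (c u)"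
    using dc_props[of u V c "c u" E v] assms by auto
  moreover obtain n where "reach E v x n" using conn_reach assms x by metis
  then have "1 \<le> gdist E v x" using x assms by (intro gdist_pos) auto
  ultimately show ?thesis by auto
qed

definition loc_gen :: "'a set \<Rightarrow> ('a \<Rightarrow> 'a \<Rightarrow> bool) \<Rightarrow> ('a \<Rightarrow> nat) \<Rightarrow> bool" where
  "loc_gen V E c \<longleftrightarrow> (\<forall>u\<in>V. \<forall>v\<in>V. E u v \<longrightarrow> c u \<noteq> c v) \<and>
     (\<forall>u\<in>V. \<forall>v\<in>V. u \<noteq> v \<longrightarrow> (\<exists>i\<in>c ` V. dist_class V E c u i \<noteq> dist_class V E c v i))"

lemma relabel:
  assumes "finite V" "loc_gen V E c"
  shows "\<exists>c'. locating_coloring V E c' (card (c ` V))"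
proof -
  let ?S = "c ` V"
  obtain g where g: "bij_betw g ?S {1..card ?S}"
    using finite_same_card_bij[of ?S "{1..card ?S}"] assms by auto
  have inj: "inj_on g ?S" using g bij_betw_def by blast
  have dc: "dist_class V E (g \<circ> c) w (g i) = dist_class V E c w i" if "i \<in> ?S" for w i
  proof -
    have "\<forall>x\<in>V. (g (c x) = g i) = (c x = i)" using inj that by (auto dest: inj_onD)
    then have "(\<lambda>n. \<exists>x\<in>V. (g \<circ> c) x = g i \<and> gdist E w x = n) = (\<lambda>n. \<exists>x\<in>V. c x = i \<and> gdist E w x = n)"
      by auto
    then show ?thesis unfolding dist_class_def by simp
  qed
  have "locating_coloring V E (g \<circ> c) (card ?S)"
    unfolding locating_coloring_def coloring_def
  proof (intro conjI ballI impI)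
    show "(g \<circ> c) ` V = {1..card ?S}" using g by (simp add: bij_betw_def image_comp)
  next
    fix u v assume "u\<in>V" "v\<in>V" "E u v"
    then show "(g \<circ> c) u \<noteq> (g \<circ> c) v" using assms(2) inj unfolding loc_gen_def
      by (auto dest: inj_onD)
  next
    fix u v assume uv: "u\<in>V" "v\<in>V" "u \<noteq> v"
    then obtain i where i: "i \<in> ?S" "dist_class V E c u i \<noteq> dist_class V E c v i"
      using assms(2) unfolding loc_gen_def by blast
    have "g i \<in> {1..card ?S}" using g i(1) bij_betwE by blast
    then show "\<exists>j\<in>{1..card ?S}. dist_class V E (g \<circ> c) u j \<noteq> dist_class V E (g \<circ> c) v j"
      using dc i by metis
  qed
  then show ?thesis by blast
qed

lemma loc_loc_gen: "locating_coloring V E c k \<Longrightarrow> loc_gen V E c \<and> c ` V = {1..k}"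
  unfolding locating_coloring_def coloring_def loc_gen_def by auto

lemma chi_le: "finite V \<Longrightarrow> loc_gen V E c \<Longrightarrow> chi_L V E \<le> card (c ` V)"
proof -
  assume "finite V" "loc_gen V E c"
  then obtain c' where "locating_coloring V E c' (card (c ` V))" using relabel by blast
  then show ?thesis unfolding chi_L_def by (intro Least_le) blast
qed

lemma chi_ex:
  assumes "connected_graph V E"
  shows "\<exists>c. locating_coloring V E c (chi_L V E)"
proof -
  have fin: "finite V" using assms unfolding connected_graph_def simple_graph_def by auto
  obtain f :: "_ \<Rightarrow> nat" where f: "inj_on f V"
    using finite_imp_inj_to_nat_seg[OF fin] by auto
  have "loc_gen V E f" unfolding loc_gen_def
  proof (intro conjI ballI impI)
    fix u v assume "u\<in>V" "v\<in>V" "E u v"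
    moreover have "\<not> E u u" using assms unfolding connected_graph_def simple_graph_def by auto
    ultimately show "f u \<noteq> f v" using f by (auto dest: inj_onD)
  next
    fix u v assume "u\<in>V" "v\<in>V" "u \<noteq> v"
    then show "\<exists>i\<in>f ` V. dist_class V E f u i \<noteq> dist_class V E f v i"
      using diff_color[OF assms, of u v f] f by (auto dest: inj_onD)
  qed
  then have "\<exists>c. locating_coloring V E c (card (f ` V))" using relabel fin by blast
  then show ?thesis unfolding chi_L_def by (rule LeastI)
qed

lemma sp_cases[case_names L R]:
  obtains a where "x = Inl a" | a h where "x = Inr (a,h)"
  by (cases x) auto

locale CG =
  fixes VG :: "'a set" and EG :: "'a \<Rightarrow> 'a \<Rightarrow> bool"
    and VH :: "'b set" and EH :: "'b \<Rightarrow> 'b \<Rightarrow> bool"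
  assumes G: "connected_graph VG EG" and H: "simple_graph VH EH"
begin

abbreviation "Vc \<equiv> coronaV VG VH"
abbreviation "Ec \<equiv> coronaE VG EG VH EH"
abbreviation "comps \<equiv> components VH EH"
abbreviation "coneEC C \<equiv> coneE C (induced EH C)"

lemma finG: "finite VG" and G_sup: "EG u v \<Longrightarrow> u\<in>VG \<and> v\<in>VG"
  and G_sym: "EG u v \<Longrightarrow> EG v u" and G_irr: "\<not> EG u u" and G_ne: "VG \<noteq> {}"
  using G unfolding connected_graph_def simple_graph_def by auto

lemma finH: "finite VH" and H_sup: "EH u v \<Longrightarrow> u\<in>VH \<and> v\<in>VH"
  and H_sym: "EH u v \<Longrightarrow> EH v u" and H_irr: "\<not> EH u u"
  using H unfolding simple_graph_def by auto

lemma Ec_sup: "Ec u v \<Longrightarrow> u\<in>Vc \<and> v\<in>Vc"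
  by (cases u rule: sp_cases; cases v rule: sp_cases) (auto simp: coronaV_def dest: G_sup H_sup)

lemma Ec_sym: "Ec u v \<Longrightarrow> Ec v u"
  by (cases u rule: sp_cases; cases v rule: sp_cases) (auto dest: G_sym H_sym)

lemma Ec_irr: "\<not> Ec u u"
  by (cases u rule: sp_cases) (auto simp: G_irr H_irr)

lemma reachG: "a\<in>VG \<Longrightarrow> b\<in>VG \<Longrightarrow> \<exists>n. reach EG a b n"
  using G unfolding connected_graph_def by auto

lemma reach_Inl: "a\<in>VG \<Longrightarrow> b\<in>VG \<Longrightarrow> \<exists>n. reach Ec (Inl a) (Inl b) n"
proof -
  assume "a\<in>VG" "b\<in>VG"
  then obtain n where "reach EG a b n" using reachG by blast
  moreover have "\<forall>x y. EG x y \<longrightarrow> Ec (Inl x) (Inl y) \<or> Inl x = Inl y" by simp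
  ultimately show ?thesis using reach_hom[of EG a b n Ec Inl] by blast
qed

lemma reach_to_Inl: "x\<in>Vc \<Longrightarrow> a\<in>VG \<Longrightarrow> \<exists>n. reach Ec x (Inl a) n"
proof (cases x rule: sp_cases)
  case (L b)
  assume "x\<in>Vc" "a\<in>VG"
  then show ?thesis using L reach_Inl by (auto simp: coronaV_def)
next
  case (R b h)
  assume x: "x\<in>Vc" "a\<in>VG"
  then have bh: "b\<in>VG" "h\<in>VH" using R by (auto simp: coronaV_def)
  then obtain n where "reach Ec (Inl b) (Inl a) n" using reach_Inl x by blast
  moreover have "Ec x (Inl b)" using R bh by simp
  ultimately show ?thesis by (blast intro: reach_step)
qed

lemma cor_simple: "simple_graph Vc Ec"
  unfolding simple_graph_def using finG finH Ec_sup Ec_sym Ec_irr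
  by (auto simp: coronaV_def)

lemma cor_conn: "connected_graph Vc Ec"
  unfolding connected_graph_def
proof (intro conjI ballI)
  show "simple_graph Vc Ec" by (rule cor_simple)
  show "Vc \<noteq> {}" using G_ne by (auto simp: coronaV_def)
next
  fix u v assume uv: "u\<in>Vc" "v\<in>Vc"
  obtain a where a: "a\<in>VG" using G_ne by blast
  obtain m where m: "reach Ec u (Inl a) m" using reach_to_Inl uv a by blast
  obtain n where n: "reach Ec v (Inl a) n" using reach_to_Inl uv a by blast
  have "\<forall>x y. Ec x y \<longrightarrow> Ec y x" using Ec_sym by blast
  then have "reach Ec (Inl a) v n" using reach_sym[OF n] by blast
  then show "\<exists>n. reach Ec u v n" using reach_trans[OF m] by blast
qed

lemma cor_reach: "u\<in>Vc \<Longrightarrow> v\<in>Vc \<Longrightarrow> \<exists>n. reach Ec u v n"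
  using cor_conn by (rule conn_reach)

definition comp :: "'b \<Rightarrow> 'b set" where
  "comp h = {w\<in>VH. \<exists>n. reach EH h w n}"

lemma comp_mem: "h\<in>VH \<Longrightarrow> comp h \<in> comps \<and> h \<in> comp h"
  unfolding comp_def components_def by (auto intro: reach_refl)

lemma comp_eq: "C \<in> comps \<Longrightarrow> h \<in> C \<Longrightarrow> C = comp h"
proof -
  assume C: "C \<in> comps" and h: "h \<in> C"
  then obtain v where v: "v\<in>VH" "C = {w\<in>VH. \<exists>n. reach EH v w n}"
    unfolding components_def by blast
  then obtain n where n: "reach EH v h n" using h by blast
  have "reach EH h v n" using reach_sym[OF n] H_sym by blast
  show ?thesis
  proof
    show "C \<subseteq> comp h" unfolding comp_def v(2) using reach_trans[OF \<open>reach EH h v n\<close>] by blast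
    show "comp h \<subseteq> C" unfolding comp_def v(2) using reach_trans[OF n] by blast
  qed
qed

lemma comp_sub: "C \<in> comps \<Longrightarrow> C \<subseteq> VH"
  unfolding components_def by auto

lemma comp_closed: "C \<in> comps \<Longrightarrow> h \<in> C \<Longrightarrow> EH h h' \<Longrightarrow> h' \<in> C"
proof -
  assume C: "C \<in> comps" and h: "h \<in> C" and e: "EH h h'"
  have "C = comp h" using comp_eq C h .
  moreover have "reach EH h h' (Suc 0)" using e by (blast intro: reach_step reach_refl)
  ultimately show ?thesis using H_sup[OF e] unfolding comp_def by blast
qed

lemma comp_closed2: "C \<in> comps \<Longrightarrow> h' \<in> C \<Longrightarrow> EH h h' \<Longrightarrow> h \<in> C"
  using comp_closed H_sym by blast

lemma fin_comps: "finite comps"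
proof -
  have "comps \<subseteq> Pow VH" unfolding components_def by auto
  then show ?thesis using finH finite_subset by blast
qed

lemma comps_ne: "VH \<noteq> {} \<Longrightarrow> comps \<noteq> {}"
  unfolding components_def by auto

lemma cone_conn: "C \<in> comps \<Longrightarrow> connected_graph (coneV C) (coneEC C)"
proof -
  assume C: "C \<in> comps"
  have fin: "finite C" using comp_sub[OF C] finH finite_subset by blast
  have sg: "simple_graph (coneV C) (coneEC C)"
  proof -
    have 1: "finite (coneV C)" using fin by (simp add: coneV_def)
    have 2: "u \<in> coneV C \<and> v \<in> coneV C" if "coneEC C u v" for u v
      using that by (cases u; cases v) (auto simp: coneV_def induced_def)
    have 3: "coneEC C v u" if "coneEC C u v" for u v
      using that by (cases u; cases v) (auto simp: induced_def dest: H_sym)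
    have 4: "\<not> coneEC C v v" for v by (cases v) (auto simp: induced_def H_irr)
    show ?thesis unfolding simple_graph_def using 1 2 3 4 by blast
  qed
  have r: "\<exists>n. reach (coneEC C) u None n" if "u \<in> coneV C" for u
  proof (cases u)
    case None then show ?thesis by (blast intro: reach_refl)
  next
    case (Some h)
    then have "coneEC C u None" using that by (auto simp: coneV_def)
    then show ?thesis by (blast intro: reach_step reach_refl)
  qed
  show ?thesis unfolding connected_graph_def
  proof (intro conjI ballI)
    show "simple_graph (coneV C) (coneEC C)" by (rule sg)
    show "coneV C \<noteq> {}" by (simp add: coneV_def)
  next
    fix u v assume "u \<in> coneV C" "v \<in> coneV C"
    then obtain m n where m: "reach (coneEC C) u None m" and n: "reach (coneEC C) v None n"
      using r by blast
    have "reach (coneEC C) None v n"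
      using reach_sym[OF n] sg unfolding simple_graph_def by blast
    then show "\<exists>n. reach (coneEC C) u v n" using reach_trans[OF m] by blast
  qed
qed

lemma cone_d2: "C \<in> comps \<Longrightarrow> u \<in> coneV C \<Longrightarrow> v \<in> coneV C \<Longrightarrow> gdist (coneEC C) u v \<le> 2"
proof -
  assume C: "C \<in> comps" and u: "u \<in> coneV C" and v: "v \<in> coneV C"
  show ?thesis
  proof (cases "u = v")
    case True then show ?thesis by (simp add: gdist_self)
  next
    case False
    show ?thesis
    proof (cases u)
      case None
      then obtain h where "v = Some h" "h \<in> C" using v False by (auto simp: coneV_def)
      then have "coneEC C u v" using None by simp
      then show ?thesis using gdist_adj[of "coneEC C" u v] by linarith
    next
      case (Some h)
      then have hu: "coneEC C u None" using u by (auto simp: coneV_def)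
      show ?thesis
      proof (cases v)
        case None then show ?thesis using hu gdist_adj[of "coneEC C" u None] by simp
      next
        case (Some h')
        then have "coneEC C None v" using v by (auto simp: coneV_def)
        then show ?thesis using hu gdist_2 by metis
      qed
    qed
  qed
qed

definition emb :: "'a \<Rightarrow> 'b option \<Rightarrow> 'a + 'a \<times> 'b" where
  "emb a x = (case x of None \<Rightarrow> Inl a | Some h \<Rightarrow> Inr (a, h))"

definition retr :: "'a \<Rightarrow> 'b set \<Rightarrow> 'a + 'a \<times> 'b \<Rightarrow> 'b option" where
  "retr a C x = (case x of Inl b \<Rightarrow> None | Inr p \<Rightarrow> (if fst p = a \<and> snd p \<in> C then Some (snd p) else None))"

lemma emb_in: "a \<in> VG \<Longrightarrow> C \<in> comps \<Longrightarrow> u \<in> coneV C \<Longrightarrow> emb a u \<in> Vc"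
proof -
  assume a: "a \<in> VG" and C: "C \<in> comps" and u: "u \<in> coneV C"
  show ?thesis
  proof (cases u)
    case None then show ?thesis using a by (simp add: emb_def coronaV_def)
  next
    case (Some h)
    then have "h \<in> VH" using u comp_sub[OF C] by (auto simp: coneV_def)
    then show ?thesis using a Some by (simp add: emb_def coronaV_def)
  qed
qed

lemma emb_dist:
  assumes a: "a \<in> VG" and C: "C \<in> comps" and u: "u \<in> coneV C" and v: "v \<in> coneV C"
  shows "gdist Ec (emb a u) (emb a v) = gdist (coneEC C) u v"
proof (rule antisym)
  obtain n where n: "reach (coneEC C) u v n" using cone_conn[OF C] u v by (rule conn_reach[THEN exE])
  have "\<forall>x y. coneEC C x y \<longrightarrow> Ec (emb a x) (emb a y) \<or> emb a x = emb a y"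
  proof (intro allI impI)
    fix x y assume "coneEC C x y"
    then show "Ec (emb a x) (emb a y) \<or> emb a x = emb a y"
      using a comp_sub[OF C] by (cases x; cases y) (auto simp: emb_def induced_def)
  qed
  then show "gdist Ec (emb a u) (emb a v) \<le> gdist (coneEC C) u v" by (rule gdist_hom[OF n])
next
  obtain n where n: "reach Ec (emb a u) (emb a v) n"
    using cor_reach emb_in a C u v by blast
  have "\<forall>x y. Ec x y \<longrightarrow> coneEC C (retr a C x) (retr a C y) \<or> retr a C x = retr a C y"
  proof (intro allI impI)
    fix x y assume e: "Ec x y"
    show "coneEC C (retr a C x) (retr a C y) \<or> retr a C x = retr a C y"
    proof (cases x rule: sp_cases)
      case (L b)
      then show ?thesis using e by (cases y rule: sp_cases) (auto simp: retr_def)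
    next
      case (R b h)
      note xR = R
      show ?thesis
      proof (cases y rule: sp_cases)
        case (L b')
        then show ?thesis using e R by (auto simp: retr_def)
      next
        case (R b' h')
        note R' = R
        note R = xR
        then have eq: "b' = b" "EH h h'" using e R' by auto
        show ?thesis
        proof (cases "b = a")
          case True
          show ?thesis
          proof (cases "h \<in> C")
            case True
            then have "h' \<in> C" using comp_closed[OF C] eq by blast
            then show ?thesis using R R' eq True \<open>b = a\<close> by (auto simp: retr_def induced_def)
          next
            case False
            then have "h' \<notin> C" using comp_closed2[OF C] eq by blast
            then show ?thesis using R R' eq False \<open>b = a\<close> by (auto simp: retr_def)
          qed
        next
          case False
          then show ?thesis using R R' eq by (auto simp: retr_def)
        qed
      qed
    qed
  qed
  then have "gdist (coneEC C) (retr a C (emb a u)) (retr a C (emb a v)) \<le> gdist Ec (emb a u) (emb a v)"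
    by (rule gdist_hom[OF n])
  moreover have "retr a C (emb a w) = w" if "w \<in> coneV C" for w
    using that by (auto simp: retr_def emb_def coneV_def)
  ultimately show "gdist (coneEC C) u v \<le> gdist Ec (emb a u) (emb a v)" using u v by simp
qed

lemma G_dist:
  assumes a: "a \<in> VG" and b: "b \<in> VG"
  shows "gdist Ec (Inl a) (Inl b) = gdist EG a b"
proof (rule antisym)
  obtain n where n: "reach EG a b n" using reachG a b by blast
  have "\<forall>x y. EG x y \<longrightarrow> Ec (Inl x) (Inl y) \<or> Inl x = Inl y" by simp
  then show "gdist Ec (Inl a) (Inl b) \<le> gdist EG a b" by (rule gdist_hom[OF n])
next
  obtain n where n: "reach Ec (Inl a) (Inl b) n" using reach_Inl a b by blast
  let ?r = "\<lambda>x. case x of Inl c \<Rightarrow> c | Inr p \<Rightarrow> fst p"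
  have "\<forall>x y. Ec x y \<longrightarrow> EG (?r x) (?r y) \<or> ?r x = ?r y"
  proof (intro allI impI)
    fix x y assume e: "Ec x y"
    show "EG (?r x) (?r y) \<or> ?r x = ?r y"
      using e by (cases x rule: sp_cases; cases y rule: sp_cases) auto
  qed
  then show "gdist EG a b \<le> gdist Ec (Inl a) (Inl b)" using gdist_hom[of Ec "Inl a" "Inl b" n EG ?r] n by simp
qed

lemma D3_reach:
  "reach Ec y x n \<Longrightarrow> y = Inr (a,h) \<Longrightarrow> h \<in> C \<Longrightarrow> C \<in> comps \<Longrightarrow> x \<notin> Inr ` ({a} \<times> C)
   \<Longrightarrow> \<exists>m<n. reach Ec (Inl a) x m"
proof (induction arbitrary: h rule: reach.induct)
  case (reach_refl u)
  then show ?case by auto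
next
  case (reach_step u w v n)
  show ?case
  proof (cases w rule: sp_cases)
    case (L b)
    then have "b = a" using reach_step by auto
    then show ?thesis using reach_step L by blast
  next
    case (R b h')
    then have "b = a" "EH h h'" using reach_step by auto
    then have "h' \<in> C" using comp_closed reach_step by blast
    then obtain m where "m < n" "reach Ec (Inl a) v m"
      using reach_step.IH[of h'] R \<open>b = a\<close> reach_step.prems by blast
    then show ?thesis using less_SucI by blast
  qed
qed

lemma D3:
  assumes a: "a \<in> VG" and C: "C \<in> comps" and h: "h \<in> C" and x: "x \<in> Vc"
    and nx: "x \<notin> Inr ` ({a} \<times> C)"
  shows "gdist Ec (Inr (a,h)) x = Suc (gdist Ec (Inl a) x)"
proof (rule antisym)
  have hV: "h \<in> VH" using comp_sub C h by blast
  have ia: "Inl a \<in> Vc" "Inr (a,h) \<in> Vc" using a hV by (auto simp: coronaV_def)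
  obtain n where "reach Ec (Inl a) x n" using cor_reach ia x by blast
  then have "reach Ec (Inl a) x (gdist Ec (Inl a) x)" by (rule gdist_reach)
  moreover have "Ec (Inr (a,h)) (Inl a)" using a hV by simp
  ultimately have "reach Ec (Inr (a,h)) x (Suc (gdist Ec (Inl a) x))" by (blast intro: reach_step)
  then show "gdist Ec (Inr (a,h)) x \<le> Suc (gdist Ec (Inl a) x)" by (rule gdist_le)
  obtain n where "reach Ec (Inr (a,h)) x n" using cor_reach ia x by blast
  then have "reach Ec (Inr (a,h)) x (gdist Ec (Inr (a,h)) x)" by (rule gdist_reach)
  then obtain m where "m < gdist Ec (Inr (a,h)) x" "reach Ec (Inl a) x m"
    using D3_reach h C nx by blast
  then show "Suc (gdist Ec (Inl a) x) \<le> gdist Ec (Inr (a,h)) x"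
    using gdist_le[of Ec "Inl a" x m] by linarith
qed

lemma nbr2:
  assumes a: "a \<in> VG" and C: "C \<in> comps" and h: "h \<in> C" and x: "x \<in> Vc"
    and nx: "x \<notin> emb a ` coneV C"
  shows "2 \<le> gdist Ec (Inr (a,h)) x"
proof -
  have hV: "h \<in> VH" using comp_sub C h by blast
  have ia: "Inr (a,h) \<in> Vc" using a hV by (auto simp: coronaV_def)
  have ne: "Inr (a,h) \<noteq> x" using nx h by (force simp: emb_def coneV_def)
  have na: "\<not> Ec (Inr (a,h)) x"
  proof
    assume e: "Ec (Inr (a,h)) x"
    show False
    proof (cases x rule: sp_cases)
      case (L b)
      then have "x = emb a None" using e by (auto simp: emb_def)
      then show False using nx by (auto simp: coneV_def)
    next
      case (R b h')
      then have "b = a" "EH h h'" using e by auto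
      then have "h' \<in> C" using comp_closed C h by blast
      then have "x = emb a (Some h')" "Some h' \<in> coneV C" using R \<open>b = a\<close> by (auto simp: emb_def coneV_def)
      then show False using nx by blast
    qed
  qed
  obtain n where r: "reach Ec (Inr (a,h)) x n" using cor_reach ia x by blast
  show ?thesis using gdist_ge2[OF r ne na] .
qed

end

context CG
begin

lemma emb_hom: "a \<in> VG \<Longrightarrow> C \<in> comps \<Longrightarrow> coneEC C x y \<Longrightarrow> Ec (emb a x) (emb a y)"
  using comp_sub by (cases x; cases y) (auto simp: emb_def induced_def)

lemma emb_inj: "emb a u = emb a v \<Longrightarrow> u = v"
  by (cases u; cases v) (auto simp: emb_def)

lemma notemb: "y \<notin> emb a ` coneV C \<Longrightarrow> y \<notin> Inr ` ({a} \<times> C)"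
proof
  assume "y \<notin> emb a ` coneV C" "y \<in> Inr ` ({a} \<times> C)"
  then obtain h where "h \<in> C" "y = Inr (a,h)" by blast
  then have "y = emb a (Some h)" "Some h \<in> coneV C" by (auto simp: emb_def coneV_def)
  then show False using \<open>y \<notin> emb a ` coneV C\<close> by blast
qed

lemma K1:
  assumes a: "a \<in> VG" and C: "C \<in> comps" and h: "h \<in> C"
    and i: "i \<in> (c \<circ> emb a) ` coneV C"
  shows "dist_class (coneV C) (coneEC C) (c \<circ> emb a) (Some h) i = dist_class Vc Ec c (Inr (a,h)) i"
proof -
  let ?d = "c \<circ> emb a"
  obtain y1 where y1: "y1 \<in> coneV C" "?d y1 = i" using i by blast
  obtain y0 where y0: "y0 \<in> coneV C" "?d y0 = i"
    "gdist (coneEC C) (Some h) y0 = dist_class (coneV C) (coneEC C) ?d (Some h) i"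
    and mn: "\<forall>y\<in>coneV C. ?d y = i \<longrightarrow> dist_class (coneV C) (coneEC C) ?d (Some h) i \<le> gdist (coneEC C) (Some h) y"
    using dc_props[of y1 "coneV C" ?d i "coneEC C" "Some h", OF y1] by blast
  let ?D = "dist_class (coneV C) (coneEC C) ?d (Some h) i"
  have sh: "Some h \<in> coneV C" using h by (simp add: coneV_def)
  have e: "Inr (a,h) = emb a (Some h)" by (simp add: emb_def)
  have D2: "?D \<le> 2" using y0(3) cone_d2[OF C sh y0(1)] by simp
  show ?thesis
  proof (rule sym, rule dc_eqI[of "emb a y0"])
    show "emb a y0 \<in> Vc" using emb_in a C y0 by blast
    show "c (emb a y0) = i" using y0 by simp
    show "gdist Ec (Inr (a,h)) (emb a y0) = ?D" using e emb_dist[OF a C sh y0(1)] y0(3) by simp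
    show "\<forall>y\<in>Vc. c y = i \<longrightarrow> ?D \<le> gdist Ec (Inr (a, h)) y"
    proof (intro ballI impI)
      fix y assume y: "y \<in> Vc" "c y = i"
      show "?D \<le> gdist Ec (Inr (a, h)) y"
      proof (cases "y \<in> emb a ` coneV C")
        case True
        then obtain w where w: "w \<in> coneV C" "y = emb a w" by blast
        then have "?d w = i" using y by simp
        then have "?D \<le> gdist (coneEC C) (Some h) w" using mn w by blast
        then show ?thesis using e emb_dist[OF a C sh w(1)] w by simp
      next
        case False
        then show ?thesis using nbr2[OF a C h y(1)] D2 by linarith
      qed
    qed
  qed
qed

lemma K2:
  assumes a: "a \<in> VG" and C: "C \<in> comps" and h: "h \<in> C"
    and i: "i \<in> c ` Vc" and ni: "i \<notin> (c \<circ> emb a) ` coneV C"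
  shows "dist_class Vc Ec c (Inr (a,h)) i = Suc (dist_class Vc Ec c (Inl a) i)"
proof -
  obtain y1 where y1: "y1 \<in> Vc" "c y1 = i" using i by blast
  obtain x0 where x0: "x0 \<in> Vc" "c x0 = i"
    "gdist Ec (Inl a) x0 = dist_class Vc Ec c (Inl a) i"
    and mn: "\<forall>y\<in>Vc. c y = i \<longrightarrow> dist_class Vc Ec c (Inl a) i \<le> gdist Ec (Inl a) y"
    using dc_props[of y1 Vc c i Ec "Inl a", OF y1] by blast
  have ne: "y \<notin> Inr ` ({a} \<times> C)" if "c y = i" for y
  proof (rule notemb)
    show "y \<notin> emb a ` coneV C" using ni that by auto
  qed
  show ?thesis
  proof (rule dc_eqI[of x0])
    show "x0 \<in> Vc" "c x0 = i" using x0 by auto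
    show "gdist Ec (Inr (a, h)) x0 = Suc (dist_class Vc Ec c (Inl a) i)"
      using D3[OF a C h x0(1) ne[OF x0(2)]] x0(3) by simp
    show "\<forall>y\<in>Vc. c y = i \<longrightarrow> Suc (dist_class Vc Ec c (Inl a) i) \<le> gdist Ec (Inr (a, h)) y"
    proof (intro ballI impI)
      fix y assume y: "y \<in> Vc" "c y = i"
      show "Suc (dist_class Vc Ec c (Inl a) i) \<le> gdist Ec (Inr (a, h)) y"
        using D3[OF a C h y(1) ne[OF y(2)]] mn y by simp
    qed
  qed
qed

lemma lower:
  assumes C: "C \<in> comps"
  shows "chi_L (coneV C) (coneEC C) \<le> chi_L Vc Ec"
proof -
  let ?k = "chi_L Vc Ec"
  obtain c where c: "locating_coloring Vc Ec c ?k" using chi_ex[OF cor_conn] by blast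
  then have lg: "loc_gen Vc Ec c" and im: "c ` Vc = {1..?k}" using loc_loc_gen by blast+
  obtain a where a: "a \<in> VG" using G_ne by blast
  let ?d = "c \<circ> emb a"
  have fin: "finite (coneV C)"
    using cone_conn[OF C] unfolding connected_graph_def simple_graph_def by blast
  have pr: "?d u \<noteq> ?d v" if "u \<in> coneV C" "v \<in> coneV C" "coneEC C u v" for u v
    using lg emb_hom[OF a C that(3)] emb_in[OF a C] that unfolding loc_gen_def by auto
  have "loc_gen (coneV C) (coneEC C) ?d"
    unfolding loc_gen_def
  proof (intro conjI ballI impI)
    fix u v assume "u \<in> coneV C" "v \<in> coneV C" "coneEC C u v"
    then show "?d u \<noteq> ?d v" by (rule pr)
  next
    fix u v assume u: "u \<in> coneV C" and v: "v \<in> coneV C" and uv: "u \<noteq> v"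
    show "\<exists>i\<in>?d ` coneV C. dist_class (coneV C) (coneEC C) ?d u i \<noteq> dist_class (coneV C) (coneEC C) ?d v i"
    proof (cases "?d u = ?d v")
      case False
      then show ?thesis using diff_color[OF cone_conn[OF C] u v, of ?d] u by blast
    next
      case True
      have notnone: "w \<noteq> None" if ww: "w \<in> coneV C" "w' \<in> coneV C" "w \<noteq> w'" "?d w = ?d w'" for w w'
      proof
        assume "w = None"
        then obtain h' where "w' = Some h'" "h' \<in> C" using ww by (auto simp: coneV_def)
        then have "coneEC C w w'" using \<open>w = None\<close> by simp
        then show False using pr ww by blast
      qed
      obtain h where h: "u = Some h" "h \<in> C" using notnone[OF u v uv True] u by (auto simp: coneV_def)
      obtain h' where h': "v = Some h'" "h' \<in> C" using notnone[OF v u _ True[symmetric]] uv v by (auto simp: coneV_def)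
      have ev: "emb a u \<in> Vc" "emb a v \<in> Vc" using emb_in[OF a C] u v by auto
      have "emb a u \<noteq> emb a v" using uv emb_inj by blast
      then obtain i where i: "i \<in> c ` Vc" "dist_class Vc Ec c (emb a u) i \<noteq> dist_class Vc Ec c (emb a v) i"
        using lg ev unfolding loc_gen_def by blast
      have eu: "emb a u = Inr (a,h)" "emb a v = Inr (a,h')" using h h' by (auto simp: emb_def)
      show ?thesis
      proof (cases "i \<in> ?d ` coneV C")
        case True
        then show ?thesis using K1[OF a C h(2) True] K1[OF a C h'(2) True] i eu h h' by metis
      next
        case False
        then show ?thesis using K2[OF a C h(2) i(1) False] K2[OF a C h'(2) i(1) False] i eu by simp
      qed
    qed
  qed
  then have "chi_L (coneV C) (coneEC C) \<le> card (?d ` coneV C)" by (rule chi_le[OF fin])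
  also have "\<dots> \<le> card (c ` Vc)"
  proof (rule card_mono)
    show "finite (c ` Vc)" using im by simp
    show "?d ` coneV C \<subseteq> c ` Vc" using emb_in[OF a C] by auto
  qed
  also have "\<dots> = ?k" using im by simp
  finally show ?thesis .
qed

end

locale UB = CG VG EG VH EH for VG :: "'a set" and EG and VH :: "'b set" and EH +
  fixes cG :: "'a \<Rightarrow> nat" and kG :: nat and cc :: "'b set \<Rightarrow> 'b option \<Rightarrow> nat"
    and kc :: "'b set \<Rightarrow> nat" and idx :: "'b set \<Rightarrow> nat"
  assumes cG: "locating_coloring VG EG cG kG"
   and cc: "\<And>C. C \<in> components VH EH \<Longrightarrow> locating_coloring (coneV C) (coneE C (induced EH C)) (cc C) (kc C)"
   and idx: "inj_on idx (components VH EH)"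
begin

definition enc :: "'b set \<Rightarrow> nat \<Rightarrow> nat" where
  "enc C j = kG + 1 + prod_encode (idx C, j)"

definition col :: "'a + 'a \<times> 'b \<Rightarrow> nat" where
  "col x = (case x of Inl a \<Rightarrow> cG a | Inr p \<Rightarrow> enc (comp (snd p)) (cc (comp (snd p)) (Some (snd p))))"

lemma enc_inj: "C \<in> comps \<Longrightarrow> C' \<in> comps \<Longrightarrow> enc C j = enc C' j' \<Longrightarrow> C = C' \<and> j = j'"
  using idx unfolding enc_def by (auto dest: inj_onD)

lemma enc_gt: "kG < enc C j"
  unfolding enc_def by simp

lemma cG_le: "a \<in> VG \<Longrightarrow> cG a \<le> kG"
  using cG unfolding locating_coloring_def coloring_def by auto

lemma cG_im: "cG ` VG = {1..kG}"
  using cG unfolding locating_coloring_def coloring_def by auto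

lemma col_Inl: "col (Inl a) = cG a"
  by (simp add: col_def)

lemma col_Inr: "C \<in> comps \<Longrightarrow> h \<in> C \<Longrightarrow> col (Inr (a,h)) = enc C (cc C (Some h))"
  using comp_eq by (simp add: col_def)

lemma col_Inr': "h \<in> VH \<Longrightarrow> comp h \<in> comps \<and> h \<in> comp h \<and> col (Inr (a,h)) = enc (comp h) (cc (comp h) (Some h))"
  using comp_mem by (simp add: col_def)

lemma Inr_in: "Inr (a,h) \<in> Vc \<Longrightarrow> a \<in> VG \<and> h \<in> VH"
  by (auto simp: coronaV_def)

lemma Inl_in: "Inl a \<in> Vc \<Longrightarrow> a \<in> VG"
  by (auto simp: coronaV_def)

lemma col_gt: "y = Inr (a,h) \<Longrightarrow> y \<in> Vc \<Longrightarrow> kG < col y"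
  using col_Inr' Inr_in enc_gt by metis

lemma cc_none: "C \<in> comps \<Longrightarrow> h \<in> C \<Longrightarrow> cc C (Some h) \<noteq> cc C None"
proof -
  assume C: "C \<in> comps" and h: "h \<in> C"
  have "coneEC C (Some h) None" using h by simp
  moreover have "Some h \<in> coneV C" "None \<in> coneV C" using h by (auto simp: coneV_def)
  ultimately show ?thesis using cc[OF C] unfolding locating_coloring_def coloring_def by blast
qed

lemma L1:
  assumes a: "a \<in> VG" and i: "i \<in> {1..kG}"
  shows "dist_class Vc Ec col (Inl a) i = dist_class VG EG cG a i"
proof -
  have "i \<in> cG ` VG" using i cG_im by simp
  then obtain y1 where y1: "y1 \<in> VG" "cG y1 = i" by blast
  obtain y0 where y0: "y0 \<in> VG" "cG y0 = i" "gdist EG a y0 = dist_class VG EG cG a i"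
    and mn: "\<forall>y\<in>VG. cG y = i \<longrightarrow> dist_class VG EG cG a i \<le> gdist EG a y"
    using dc_props[of y1 VG cG i EG a, OF y1] by blast
  show ?thesis
  proof (rule dc_eqI[of "Inl y0"])
    show "Inl y0 \<in> Vc" using y0 by (simp add: coronaV_def)
    show "col (Inl y0) = i" using y0 by (simp add: col_Inl)
    show "gdist Ec (Inl a) (Inl y0) = dist_class VG EG cG a i" using G_dist[OF a y0(1)] y0 by simp
    show "\<forall>y\<in>Vc. col y = i \<longrightarrow> dist_class VG EG cG a i \<le> gdist Ec (Inl a) y"
    proof (intro ballI impI)
      fix y assume y: "y \<in> Vc" "col y = i"
      show "dist_class VG EG cG a i \<le> gdist Ec (Inl a) y"
      proof (cases y rule: sp_cases)
        case (L b)
        then have "b \<in> VG" using y Inl_in by blast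
        then show ?thesis using G_dist[OF a] mn L y by (simp add: col_Inl)
      next
        case (R b h)
        then show ?thesis using col_gt[OF R y(1)] y i by simp
      qed
    qed
  qed
qed

lemma L2:
  assumes a: "a \<in> VG" and h: "h \<in> VH" and i: "i \<in> {1..kG}"
  shows "dist_class Vc Ec col (Inr (a,h)) i = Suc (dist_class VG EG cG a i)"
proof -
  have C: "comp h \<in> comps" "h \<in> comp h" using comp_mem h by auto
  have "i \<in> cG ` VG" using i cG_im by simp
  then obtain y1 where y1: "y1 \<in> VG" "cG y1 = i" by blast
  obtain y0 where y0: "y0 \<in> VG" "cG y0 = i" "gdist EG a y0 = dist_class VG EG cG a i"
    and mn: "\<forall>y\<in>VG. cG y = i \<longrightarrow> dist_class VG EG cG a i \<le> gdist EG a y"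
    using dc_props[of y1 VG cG i EG a, OF y1] by blast
  have d3: "gdist Ec (Inr (a,h)) (Inl b) = Suc (gdist EG a b)" if "b \<in> VG" for b
    using D3[OF a C(1) C(2), of "Inl b"] G_dist[OF a that] that by (auto simp: coronaV_def)
  show ?thesis
  proof (rule dc_eqI[of "Inl y0"])
    show "Inl y0 \<in> Vc" using y0 by (simp add: coronaV_def)
    show "col (Inl y0) = i" using y0 by (simp add: col_Inl)
    show "gdist Ec (Inr (a,h)) (Inl y0) = Suc (dist_class VG EG cG a i)" using d3 y0 by simp
    show "\<forall>y\<in>Vc. col y = i \<longrightarrow> Suc (dist_class VG EG cG a i) \<le> gdist Ec (Inr (a,h)) y"
    proof (intro ballI impI)
      fix y assume y: "y \<in> Vc" "col y = i"
      show "Suc (dist_class VG EG cG a i) \<le> gdist Ec (Inr (a,h)) y"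
      proof (cases y rule: sp_cases)
        case (L b)
        then have "b \<in> VG" using y Inl_in by blast
        then show ?thesis using d3 mn L y by (simp add: col_Inl)
      next
        case (R b h)
        then show ?thesis using col_gt[OF R y(1)] y i by simp
      qed
    qed
  qed
qed

lemma L3:
  assumes C: "C \<in> comps" and h: "h \<in> C"
  shows "dist_class (coneV C) (coneEC C) (cc C) (Some h) (cc C None) = 1"
proof (rule dc_eqI[of None])
  have sh: "Some h \<in> coneV C" using h by (simp add: coneV_def)
  show "None \<in> coneV C" by (simp add: coneV_def)
  show "cc C None = cc C None" ..
  have "coneEC C (Some h) None" using h by simp
  moreover obtain n where "reach (coneEC C) (Some h) None n"
    using conn_reach[OF cone_conn[OF C] sh] by (auto simp: coneV_def)
  ultimately show "gdist (coneEC C) (Some h) None = 1"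
    using gdist_adj gdist_pos by (metis le_antisym option.distinct(1))
  show "\<forall>y\<in>coneV C. cc C y = cc C None \<longrightarrow> 1 \<le> gdist (coneEC C) (Some h) y"
  proof (intro ballI impI)
    fix y assume y: "y \<in> coneV C" "cc C y = cc C None"
    then have "y \<noteq> Some h" using cc_none[OF C h] by auto
    moreover obtain n where "reach (coneEC C) (Some h) y n" using conn_reach[OF cone_conn[OF C] sh y(1)] by blast
    ultimately show "1 \<le> gdist (coneEC C) (Some h) y" using gdist_pos by metis
  qed
qed

lemma L4:
  assumes a: "a \<in> VG" and C: "C \<in> comps" and h: "h \<in> C"
    and j: "j \<in> cc C ` coneV C" and jn: "j \<noteq> cc C None"
  shows "dist_class Vc Ec col (Inr (a,h)) (enc C j) = dist_class (coneV C) (coneEC C) (cc C) (Some h) j"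
proof -
  let ?D = "dist_class (coneV C) (coneEC C) (cc C) (Some h) j"
  obtain y1 where y1: "y1 \<in> coneV C" "cc C y1 = j" using j by blast
  obtain y0 where y0: "y0 \<in> coneV C" "cc C y0 = j" "gdist (coneEC C) (Some h) y0 = ?D"
    and mn: "\<forall>y\<in>coneV C. cc C y = j \<longrightarrow> ?D \<le> gdist (coneEC C) (Some h) y"
    using dc_props[of y1 "coneV C" "cc C" j "coneEC C" "Some h", OF y1] by blast
  obtain h0 where h0: "y0 = Some h0" "h0 \<in> C" using y0 jn by (auto simp: coneV_def)
  have sh: "Some h \<in> coneV C" using h by (simp add: coneV_def)
  have e: "\<And>x. Inr (a,x) = emb a (Some x)" by (simp add: emb_def)
  have D2: "?D \<le> 2" using y0(3) cone_d2[OF C sh y0(1)] by simp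
  show ?thesis
  proof (rule dc_eqI[of "Inr (a,h0)"])
    show "Inr (a,h0) \<in> Vc" using a h0 comp_sub[OF C] by (auto simp: coronaV_def)
    show "col (Inr (a,h0)) = enc C j" using col_Inr[OF C h0(2)] y0 h0 by simp
    show "gdist Ec (Inr (a,h)) (Inr (a,h0)) = ?D" using e emb_dist[OF a C sh y0(1)] y0(3) h0 by simp
    show "\<forall>y\<in>Vc. col y = enc C j \<longrightarrow> ?D \<le> gdist Ec (Inr (a, h)) y"
    proof (intro ballI impI)
      fix y assume y: "y \<in> Vc" "col y = enc C j"
      show "?D \<le> gdist Ec (Inr (a, h)) y"
      proof (cases y rule: sp_cases)
        case (L b)
        then show ?thesis using y cG_le[of b] Inl_in enc_gt[of C j] by (simp add: col_Inl)
      next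
        case (R b h1)
        then have bh: "b \<in> VG" "h1 \<in> VH" using y Inr_in by blast+
        have c1: "comp h1 \<in> comps" "h1 \<in> comp h1" "col y = enc (comp h1) (cc (comp h1) (Some h1))"
          using col_Inr'[OF bh(2), of b] R by auto
        have eqE: "enc (comp h1) (cc (comp h1) (Some h1)) = enc C j" using c1(3) y(2) by simp
        have "comp h1 = C \<and> cc (comp h1) (Some h1) = j" using enc_inj[OF c1(1) C eqE] .
        then have h1: "h1 \<in> C" "cc C (Some h1) = j" using c1(2) by metis+
        have s1: "Some h1 \<in> coneV C" using h1 by (simp add: coneV_def)
        show ?thesis
        proof (cases "b = a")
          case True
          then show ?thesis using e emb_dist[OF a C sh s1] mn s1 h1 R by simp
        next
          case False
          have "y \<notin> emb a ` coneV C" using False R by (auto simp: emb_def split: option.splits)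
          then show ?thesis using nbr2[OF a C h y(1)] D2 by linarith
        qed
      qed
    qed
  qed
qed

lemma col_loc: "loc_gen Vc Ec col"
  unfolding loc_gen_def
proof (intro conjI ballI impI)
  fix u v assume u: "u \<in> Vc" and v: "v \<in> Vc" and e: "Ec u v"
  show "col u \<noteq> col v"
  proof (cases u rule: sp_cases)
    case (L a)
    show ?thesis
    proof (cases v rule: sp_cases)
      case (L b)
      then have "EG a b" using e \<open>u = Inl a\<close> by simp
      then show ?thesis using cG G_sup L \<open>u = Inl a\<close> unfolding locating_coloring_def coloring_def
        by (auto simp: col_Inl)
    next
      case (R b h)
      have "cG a \<le> kG" using cG_le Inl_in u \<open>u = Inl a\<close> by blast
      then show ?thesis using col_gt[OF R v] \<open>u = Inl a\<close> by (simp add: col_Inl)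
    qed
  next
    case (R a h)
    note uR = R
    show ?thesis
    proof (cases v rule: sp_cases)
      case (L b)
      have "cG b \<le> kG" using cG_le Inl_in v L by blast
      then show ?thesis using col_gt[OF R u] L by (simp add: col_Inl)
    next
      case (R b h')
      then have eq: "b = a" "EH h h'" using e uR by auto
      have hV: "h \<in> VH" using Inr_in u uR by blast
      have C: "comp h \<in> comps" "h \<in> comp h" using comp_mem hV by auto
      have h': "h' \<in> comp h" using comp_closed[OF C eq(2)] .
      have "coneEC (comp h) (Some h) (Some h')" using C h' eq by (simp add: induced_def)
      moreover have "Some h \<in> coneV (comp h)" "Some h' \<in> coneV (comp h)" using C h' by (auto simp: coneV_def)
      ultimately have "cc (comp h) (Some h) \<noteq> cc (comp h) (Some h')"
        using cc[OF C(1)] unfolding locating_coloring_def coloring_def by blast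
      then show ?thesis using col_Inr[OF C] col_Inr[OF C(1) h'] enc_inj[OF C(1) C(1)] uR R eq by metis
    qed
  qed
next
  fix u v assume u: "u \<in> Vc" and v: "v \<in> Vc" and uv: "u \<noteq> v"
  show "\<exists>i\<in>col ` Vc. dist_class Vc Ec col u i \<noteq> dist_class Vc Ec col v i"
  proof (cases "col u = col v")
    case False
    then show ?thesis using diff_color[OF cor_conn u v, of col] u by blast
  next
    case True
    have Gi: "i \<in> col ` Vc" if "i \<in> {1..kG}" for i
    proof -
      have "i \<in> cG ` VG" using that cG_im by simp
      then obtain y where "y \<in> VG" "cG y = i" by blast
      then have "Inl y \<in> Vc" "col (Inl y) = i" by (auto simp: coronaV_def col_Inl)
      then show ?thesis using imageI[of "Inl y" Vc col] by simp
    qed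
    show ?thesis
    proof (cases u rule: sp_cases)
      case (L a)
      note uL = L
      show ?thesis
      proof (cases v rule: sp_cases)
        case (L b)
        have ab: "a \<in> VG" "b \<in> VG" "a \<noteq> b" using u v uv uL L Inl_in by auto
        then obtain i where i: "i \<in> {1..kG}" "dist_class VG EG cG a i \<noteq> dist_class VG EG cG b i"
          using cG unfolding locating_coloring_def by blast
        then show ?thesis using L1[OF ab(1) i(1)] L1[OF ab(2) i(1)] Gi[OF i(1)] uL L by metis
      next
        case (R b h)
        have "cG a \<le> kG" using cG_le Inl_in u uL by blast
        then show ?thesis using True col_gt[OF R v] uL by (simp add: col_Inl)
      qed
    next
      case (R a h)
      note uR = R
      show ?thesis
      proof (cases v rule: sp_cases)
        case (L b)
        have "cG b \<le> kG" using cG_le Inl_in v L by blast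
        then show ?thesis using True col_gt[OF R u] L by (simp add: col_Inl)
      next
        case (R b h')
        have ah: "a \<in> VG" "h \<in> VH" using Inr_in u uR by blast+
        have bh: "b \<in> VG" "h' \<in> VH" using Inr_in v R by blast+
        have c1: "comp h \<in> comps" "h \<in> comp h" "col u = enc (comp h) (cc (comp h) (Some h))"
          using col_Inr'[OF ah(2), of a] uR by auto
        have c2: "comp h' \<in> comps" "h' \<in> comp h'" "col v = enc (comp h') (cc (comp h') (Some h'))"
          using col_Inr'[OF bh(2), of b] R by auto
        have eqE: "enc (comp h) (cc (comp h) (Some h)) = enc (comp h') (cc (comp h') (Some h'))"
          using c1(3) c2(3) True by simp
        have "comp h = comp h' \<and> cc (comp h) (Some h) = cc (comp h') (Some h')"
          using enc_inj[OF c1(1) c2(1) eqE] .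
        then have same: "comp h' = comp h" "cc (comp h) (Some h) = cc (comp h) (Some h')" by metis+
        define C where "C = comp h"
        have C: "C \<in> comps" "h \<in> C" "h' \<in> C" using c1 c2 same C_def by auto
        show ?thesis
        proof (cases "a = b")
          case False
          obtain i where i: "i \<in> {1..kG}" "dist_class VG EG cG a i \<noteq> dist_class VG EG cG b i"
            using cG False ah bh unfolding locating_coloring_def by blast
          then show ?thesis using L2[OF ah(1) ah(2) i(1)] L2[OF bh(1) bh(2) i(1)] Gi[OF i(1)] uR R
            by (metis Suc_inject)
        next
          case True
          then have hh: "h \<noteq> h'" using uv uR R by auto
          have sh: "Some h \<in> coneV C" "Some h' \<in> coneV C" using C by (auto simp: coneV_def)
          obtain j where j: "j \<in> {1..kc C}"
            "dist_class (coneV C) (coneEC C) (cc C) (Some h) j \<noteq> dist_class (coneV C) (coneEC C) (cc C) (Some h') j"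
            using cc[OF C(1)] sh hh unfolding locating_coloring_def by blast
          have jn: "j \<noteq> cc C None" using j(2) L3[OF C(1) C(2)] L3[OF C(1) C(3)] by auto
          have jim: "j \<in> cc C ` coneV C" using j(1) cc[OF C(1)] unfolding locating_coloring_def coloring_def by auto
          have "enc C j \<in> col ` Vc"
          proof -
            obtain y where y: "y \<in> coneV C" "cc C y = j" using jim by blast
            then obtain h0 where h0: "y = Some h0" "h0 \<in> C" using jn by (auto simp: coneV_def)
            have "Inr (a,h0) \<in> Vc" using ah h0 comp_sub[OF C(1)] by (auto simp: coronaV_def)
            moreover have "col (Inr (a,h0)) = enc C j" using col_Inr[OF C(1) h0(2)] y h0 by simp
            ultimately show ?thesis by (metis imageI)
          qed
          then show ?thesis using L4[OF ah(1) C(1) C(2) jim jn] L4[OF ah(1) C(1) C(3) jim jn] j(2) uR R True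
            by metis
        qed
      qed
    qed
  qed
qed

lemma col_card: "card (col ` Vc) \<le> kG + (\<Sum>C\<in>comps. kc C - 1)"
proof -
  let ?A = "\<lambda>C. enc C ` ({1..kc C} - {cc C None})"
  have sub: "col ` Vc \<subseteq> cG ` VG \<union> (\<Union>C\<in>comps. ?A C)"
  proof
    fix x assume "x \<in> col ` Vc"
    then obtain y where y: "y \<in> Vc" "x = col y" by blast
    show "x \<in> cG ` VG \<union> (\<Union>C\<in>comps. ?A C)"
    proof (cases y rule: sp_cases)
      case (L a)
      then show ?thesis using y Inl_in by (auto simp: col_Inl)
    next
      case (R a h)
      then have hV: "h \<in> VH" using y Inr_in by blast
      have c1: "comp h \<in> comps" "h \<in> comp h" "col y = enc (comp h) (cc (comp h) (Some h))"
        using col_Inr'[OF hV, of a] R by auto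
      have "cc (comp h) (Some h) \<in> {1..kc (comp h)}"
        using cc[OF c1(1)] c1(2) unfolding locating_coloring_def coloring_def by (auto simp: coneV_def)
      moreover have "cc (comp h) (Some h) \<noteq> cc (comp h) None" using cc_none c1 by blast
      ultimately have "x \<in> ?A (comp h)" using y c1 by auto
      then show ?thesis using c1(1) by blast
    qed
  qed
  have finA: "finite (\<Union>C\<in>comps. ?A C)" using fin_comps by auto
  have "card (col ` Vc) \<le> card (cG ` VG \<union> (\<Union>C\<in>comps. ?A C))"
    using sub finA finG by (intro card_mono) auto
  also have "\<dots> \<le> card (cG ` VG) + card (\<Union>C\<in>comps. ?A C)" by (rule card_Un_le)
  also have "card (cG ` VG) = kG" using cG_im by simp
  also have "card (\<Union>C\<in>comps. ?A C) \<le> (\<Sum>C\<in>comps. card (?A C))" using fin_comps by (rule card_UN_le)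
  also have "\<dots> \<le> (\<Sum>C\<in>comps. kc C - 1)"
  proof (rule sum_mono)
    fix C assume C: "C \<in> comps"
    have "cc C None \<in> {1..kc C}"
      using cc[OF C] unfolding locating_coloring_def coloring_def by (auto simp: coneV_def)
    then have "card ({1..kc C} - {cc C None}) = kc C - 1" by simp
    then show "card (?A C) \<le> kc C - 1" using card_image_le[of "{1..kc C} - {cc C None}" "enc C"] by simp
  qed
  finally show ?thesis by simp
qed

lemma upper: "chi_L Vc Ec \<le> kG + (\<Sum>C\<in>comps. kc C - 1)"
proof -
  have "finite Vc" using cor_simple unfolding simple_graph_def by blast
  then have "chi_L Vc Ec \<le> card (col ` Vc)" using chi_le col_loc by blast
  then show ?thesis using col_card by linarith
qed

end

theorem theorem1:
  fixes VG :: "'a set" and EG :: "'a \<Rightarrow> 'a \<Rightarrow> bool"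
    and VH :: "'b set" and EH :: "'b \<Rightarrow> 'b \<Rightarrow> bool"
  assumes "connected_graph VG EG" and "card VG \<ge> 2"
    and "simple_graph VH EH" and "VH \<noteq> {}"
  shows "Max ((\<lambda>C. chi_L (coneV C) (coneE C (induced EH C))) ` components VH EH)
           \<le> chi_L (coronaV VG VH) (coronaE VG EG VH EH)
       \<and> chi_L (coronaV VG VH) (coronaE VG EG VH EH)
           \<le> chi_L VG EG + (\<Sum>C\<in>components VH EH. chi_L (coneV C) (coneE C (induced EH C)) - 1)"
proof -
  interpret CG VG EG VH EH using assms(1,3) by unfold_locales
  have fc: "finite (components VH EH)" by (rule fin_comps)
  have ne: "components VH EH \<noteq> {}" using comps_ne assms(4) by blast
  have lo: "Max ((\<lambda>C. chi_L (coneV C) (coneE C (induced EH C))) ` components VH EH)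
           \<le> chi_L (coronaV VG VH) (coronaE VG EG VH EH)"
    using fc ne lower by (subst Max_le_iff) auto
  obtain cG where cG: "locating_coloring VG EG cG (chi_L VG EG)" using chi_ex[OF assms(1)] by blast
  have "\<forall>C\<in>components VH EH. \<exists>c. locating_coloring (coneV C) (coneE C (induced EH C)) c
          (chi_L (coneV C) (coneE C (induced EH C)))"
    using chi_ex cone_conn by blast
  then obtain cc where cc: "\<forall>C\<in>components VH EH. locating_coloring (coneV C) (coneE C (induced EH C)) (cc C)
          (chi_L (coneV C) (coneE C (induced EH C)))"
    by (rule bchoice[THEN exE]) blast
  obtain idx :: "'b set \<Rightarrow> nat" where idx: "inj_on idx (components VH EH)"
    using finite_imp_inj_to_nat_seg[OF fc] by blast
  interpret UB VG EG VH EH cG "chi_L VG EG" cc "\<lambda>C. chi_L (coneV C) (coneE C (induced EH C))" idx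
    using cG cc idx by unfold_locales auto
  show ?thesis using lo upper by blast
qed

end
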